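(* Let $\Sigma$ be a signature, let $\mathscr F_\Sigma:\mathbf{Fuz}_H\to\mathbf{Alg}(\Sigma)$ be a left adjoint to the forgetful functor $\mathscr U_\Sigma:\mathbf{Alg}(\Sigma)\to\mathbf{Fuz}_H$, and let $\mathscr X_0=\{\mathscr F_\Sigma(X,c_\bot)\mid X\text{ a set}\}$ (where $c_\bot$ is constantly $\bot$) and $\mathscr X_{\mathsf E}=\{\mathscr F_\Sigma(X,\mu_X)\mid(X,\mu_X)\in\mathbf{Fuz}_H\}$. For a class $\mathscr X$ of $\Sigma$-algebras let $\mathscr E_{\Sigma,\mathscr X}$ be the class of $e\in\mathscr E_\Sigma$ such that every $P\in\mathscr X$ is projective with respect to $e$. Then: (1) $\mathscr E_{\Sigma,\mathscr X_0}=\mathscr E_\Sigma$; (2) $\mathscr E_{\Sigma,\mathscr X_{\mathsf E}}=\{e\in\mathscr E_\Sigma\mid\mathscr U_\Sigma(e)\text{ is a split epimorphism in }\mathbf{Fuz}_H\}$.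
   Context: $H$ is a frame with bottom $\bot$. An $H$-fuzzy set is a pair $(A,\mu_A)$ of a set $A$ and a function $\mu_A:A\to H$; an arrow $f:(A,\mu_A)\to(B,\mu_B)$ is a function with $\mu_A(x)\le\mu_B(f(x))$; they form $\mathbf{Fuz}_H$. For $n\ge1$, $(A,\mu_A)^n=(A^n,\mu)$ with $\mu(a_1,\dots,a_n)=\bigwedge_i\mu_A(a_i)$. A signature $\Sigma=(O,\mathrm{ar},C)$ consists of a set $O$ of operation symbols with arity $\mathrm{ar}:O\to\{1,2,\dots\}$ and a set $C$ of constant symbols. A $\Sigma$-algebra $\mathcal A=((A,\mu_A),\Sigma^{\mathcal A})$ is an $H$-fuzzy set $(A,\mu_A)$ together with, for each $f\in O$, an arrow $f^{\mathcal A}:(A,\mu_A)^{\mathrm{ar}(f)}\to(A,\mu_A)$ of $\mathbf{Fuz}_H$ and, for each $c\in C$, an element $c^{\mathcal A}\in A$. A morphism of $\Sigma$-algebras is an arrow of $\mathbf{Fuz}_H$ between carriers preserving constants and commuting with operations; this gives the category $\mathbf{Alg}(\Sigma)$, with forgetful functor $\mathscr U_\Sigma$ to $\mathbf{Fuz}_H$ (which has a left adjoint). $\mathscr E_\Sigma$ is the class of morphisms of $\Sigma$-algebras whose underlying function is surjective. An object $P$ is projective with respect to an arrow $e:A\to B$ if for every $h:P\to B$ there is $k:P\to A$ with $e\circ k=h$. *)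

theory Defs
  imports Main
begin

text \<open>The frame H is a type 'h of class complete_lattice; the frame law is assumed
 in the theorem. An H-fuzzy set is a carrier A :: 'a set with mu :: 'a => 'h.\<close>

definition fuz_arrow :: "'a set \<Rightarrow> ('a \<Rightarrow> 'h::order) \<Rightarrow> 'b set \<Rightarrow> ('b \<Rightarrow> 'h) \<Rightarrow> ('a \<Rightarrow> 'b) \<Rightarrow> bool" where
  "fuz_arrow A muA B muB f \<longleftrightarrow> (\<forall>x\<in>A. f x \<in> B \<and> muA x \<le> muB (f x))"

definition is_frame :: "'h::complete_lattice itself \<Rightarrow> bool" where
  "is_frame _ \<longleftrightarrow> (\<forall>(a::'h) S. inf a (Sup S) = Sup ((inf a) ` S))"

record ('a, 'h, 'o, 'c) alg =
  acar :: "'a set"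
  amu :: "'a \<Rightarrow> 'h"
  aop :: "'o \<Rightarrow> 'a list \<Rightarrow> 'a"
  acst :: "'c \<Rightarrow> 'a"

definition signature :: "'o set \<Rightarrow> ('o \<Rightarrow> nat) \<Rightarrow> 'c set \<Rightarrow> bool" where
  "signature Ops ar C \<longleftrightarrow> (\<forall>f\<in>Ops. 1 \<le> ar f)"

text \<open>The arrow condition for f^A : (A,mu_A)^n -> (A,mu_A): mu of the tuple is the
 meet of the memberships of its components (n >= 1).\<close>

definition is_alg :: "'o set \<Rightarrow> ('o \<Rightarrow> nat) \<Rightarrow> 'c set \<Rightarrow> ('a, 'h::complete_lattice, 'o, 'c) alg \<Rightarrow> bool" where
  "is_alg Ops ar C A \<longleftrightarrow>
     (\<forall>f\<in>Ops. \<forall>xs. set xs \<subseteq> acar A \<and> length xs = ar f \<longrightarrow>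
         aop A f xs \<in> acar A \<and> Inf (amu A ` set xs) \<le> amu A (aop A f xs))
   \<and> (\<forall>c\<in>C. acst A c \<in> acar A)"

definition alg_hom :: "'o set \<Rightarrow> ('o \<Rightarrow> nat) \<Rightarrow> 'c set \<Rightarrow> ('a, 'h::complete_lattice, 'o, 'c) alg
     \<Rightarrow> ('b, 'h, 'o, 'c) alg \<Rightarrow> ('a \<Rightarrow> 'b) \<Rightarrow> bool" where
  "alg_hom Ops ar C A B h \<longleftrightarrow>
     fuz_arrow (acar A) (amu A) (acar B) (amu B) h
   \<and> (\<forall>c\<in>C. h (acst A c) = acst B c)
   \<and> (\<forall>f\<in>Ops. \<forall>xs. set xs \<subseteq> acar A \<and> length xs = ar f \<longrightarrow>
         h (aop A f xs) = aop B f (map h xs))"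

definition in_E_Sigma :: "'o set \<Rightarrow> ('o \<Rightarrow> nat) \<Rightarrow> 'c set \<Rightarrow> ('a, 'h::complete_lattice, 'o, 'c) alg
     \<Rightarrow> ('b, 'h, 'o, 'c) alg \<Rightarrow> ('a \<Rightarrow> 'b) \<Rightarrow> bool" where
  "in_E_Sigma Ops ar C A B e \<longleftrightarrow> alg_hom Ops ar C A B e \<and> e ` acar A = acar B"

text \<open>P is projective w.r.t. e : A -> B. Morphisms are identified with their
 restriction to the carrier of the domain.\<close>

definition projective_wrt :: "'o set \<Rightarrow> ('o \<Rightarrow> nat) \<Rightarrow> 'c set \<Rightarrow> ('p, 'h::complete_lattice, 'o, 'c) alg
     \<Rightarrow> ('a, 'h, 'o, 'c) alg \<Rightarrow> ('b, 'h, 'o, 'c) alg \<Rightarrow> ('a \<Rightarrow> 'b) \<Rightarrow> bool" where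
  "projective_wrt Ops ar C P A B e \<longleftrightarrow>
     (\<forall>h. alg_hom Ops ar C P B h \<longrightarrow>
        (\<exists>k. alg_hom Ops ar C P A k \<and> (\<forall>x\<in>acar P. e (k x) = h x)))"

definition split_epi_fuz :: "'a set \<Rightarrow> ('a \<Rightarrow> 'h::order) \<Rightarrow> 'b set \<Rightarrow> ('b \<Rightarrow> 'h) \<Rightarrow> ('a \<Rightarrow> 'b) \<Rightarrow> bool" where
  "split_epi_fuz A muA B muB e \<longleftrightarrow>
     fuz_arrow A muA B muB e \<and>
     (\<exists>s. fuz_arrow B muB A muA s \<and> (\<forall>y\<in>B. e (s y) = y))"

section \<open>A concrete left adjoint F_Sigma: the free (term) algebra\<close>

datatype ('o, 'c, 'x) trm = Var 'x | Cst 'c | App 'o "('o, 'c, 'x) trm list"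

inductive wft :: "'o set \<Rightarrow> ('o \<Rightarrow> nat) \<Rightarrow> 'c set \<Rightarrow> 'x set \<Rightarrow> ('o, 'c, 'x) trm \<Rightarrow> bool"
  for Ops ar C X where
  "x \<in> X \<Longrightarrow> wft Ops ar C X (Var x)"
| "c \<in> C \<Longrightarrow> wft Ops ar C X (Cst c)"
| "f \<in> Ops \<Longrightarrow> length ts = ar f \<Longrightarrow> \<forall>t\<in>set ts. wft Ops ar C X t \<Longrightarrow> wft Ops ar C X (App f ts)"

text \<open>Least membership making the generators and all operations arrows.\<close>

fun tmu :: "('x \<Rightarrow> 'h::complete_lattice) \<Rightarrow> ('o, 'c, 'x) trm \<Rightarrow> 'h" where
  "tmu mu (Var x) = mu x"
| "tmu mu (Cst c) = bot"
| "tmu mu (App f ts) = Inf (set (map (tmu mu) ts))"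

definition free_alg :: "'o set \<Rightarrow> ('o \<Rightarrow> nat) \<Rightarrow> 'c set \<Rightarrow> 'x set \<Rightarrow> ('x \<Rightarrow> 'h::complete_lattice)
     \<Rightarrow> (('o, 'c, 'x) trm, 'h, 'o, 'c) alg" where
  "free_alg Ops ar C X mu =
     \<lparr>acar = {t. wft Ops ar C X t}, amu = tmu mu, aop = App, acst = Cst\<rparr>"

end

theory Submission
  imports Defs
begin

fun ev :: "('x \<Rightarrow> 'a) \<Rightarrow> ('o \<Rightarrow> 'a list \<Rightarrow> 'a) \<Rightarrow> ('c \<Rightarrow> 'a) \<Rightarrow> ('o, 'c, 'x) trm \<Rightarrow> 'a" where
  "ev g op cs (Var x) = g x"
| "ev g op cs (Cst c) = cs c"
| "ev g op cs (App f ts) = op f (map (ev g op cs) ts)"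

lemma ev_props:
  fixes A :: "('a, 'h::complete_lattice, 'o, 'c) alg"
  assumes algA: "is_alg Ops ar C A"
    and gX: "\<forall>x\<in>X. g x \<in> acar A \<and> mu x \<le> amu A (g x)"
  shows "wft Ops ar C X t \<Longrightarrow> ev g (aop A) (acst A) t \<in> acar A \<and> tmu mu t \<le> amu A (ev g (aop A) (acst A) t)"
proof (induction t rule: wft.induct)
  case (1 x) then show ?case using gX by simp
next
  case (2 c) then show ?case using algA by (simp add: is_alg_def)
next
  case (3 f ts)
  let ?ev = "ev g (aop A) (acst A)"
  have sub: "set (map ?ev ts) \<subseteq> acar A" using 3 by auto
  have len: "length (map ?ev ts) = ar f" using 3 by simp
  have c1: "aop A f (map ?ev ts) \<in> acar A \<and> Inf (amu A ` set (map ?ev ts)) \<le> amu A (aop A f (map ?ev ts))"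
    using algA 3(1) sub len unfolding is_alg_def by blast
  have "Inf (tmu mu ` set ts) \<le> Inf (amu A ` set (map ?ev ts))"
  proof (rule Inf_greatest)
    fix y assume "y \<in> amu A ` set (map ?ev ts)"
    then obtain t where t: "t \<in> set ts" "y = amu A (?ev t)" by auto
    then have "Inf (tmu mu ` set ts) \<le> tmu mu t" by (simp add: Inf_lower)
    also have "\<dots> \<le> y" using 3(3) t by auto
    finally show "Inf (tmu mu ` set ts) \<le> y" .
  qed
  then show ?case using c1 by (auto intro: order_trans)
qed

lemma ev_hom:
  fixes A :: "('a, 'h::complete_lattice, 'o, 'c) alg"
  assumes algA: "is_alg Ops ar C A"
    and gX: "\<forall>x\<in>X. g x \<in> acar A \<and> mu x \<le> amu A (g x)"
  shows "alg_hom Ops ar C (free_alg Ops ar C X mu) A (ev g (aop A) (acst A))"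
  using ev_props[OF algA gX]
  unfolding alg_hom_def fuz_arrow_def free_alg_def by auto

lemma ev_comm:
  fixes A :: "('a, 'h::complete_lattice, 'o, 'c) alg"
  assumes algA: "is_alg Ops ar C A"
    and gX: "\<forall>x\<in>X. g x \<in> acar A \<and> mu x \<le> amu A (g x)"
    and eh: "alg_hom Ops ar C A B e"
    and hh: "alg_hom Ops ar C (free_alg Ops ar C X mu) B h"
    and ge: "\<forall>x\<in>X. e (g x) = h (Var x)"
  shows "wft Ops ar C X t \<Longrightarrow> e (ev g (aop A) (acst A) t) = h t"
proof (induction t rule: wft.induct)
  case (1 x) then show ?case using ge by simp
next
  case (2 c)
  have "h (Cst c) = acst B c" using hh 2 unfolding alg_hom_def free_alg_def by auto
  moreover have "e (acst A c) = acst B c" using eh 2 unfolding alg_hom_def by auto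
  ultimately show ?case by simp
next
  case (3 f ts)
  let ?ev = "ev g (aop A) (acst A)"
  have sub: "set (map ?ev ts) \<subseteq> acar A" using 3 ev_props[OF algA gX] by auto
  have "e (aop A f (map ?ev ts)) = aop B f (map e (map ?ev ts))"
    using eh 3(1,2) sub unfolding alg_hom_def by auto
  also have "map e (map ?ev ts) = map h ts" using 3(3) by auto
  also have "aop B f (map h ts) = h (App f ts)"
  proof -
    have "set ts \<subseteq> Collect (wft Ops ar C X)" using 3(3) by auto
    then show ?thesis using hh 3(1,2) unfolding alg_hom_def free_alg_def by auto
  qed
  finally show ?case by simp
qed

lemma proj_gen:
  fixes A :: "('a, 'h::complete_lattice, 'o, 'c) alg"
  assumes algA: "is_alg Ops ar C A"
    and eh: "alg_hom Ops ar C A B e"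
    and ex: "\<And>h. alg_hom Ops ar C (free_alg Ops ar C X mu) B h \<Longrightarrow>
       \<exists>g. \<forall>x\<in>X. g x \<in> acar A \<and> mu x \<le> amu A (g x) \<and> e (g x) = h (Var x)"
  shows "projective_wrt Ops ar C (free_alg Ops ar C X mu) A B e"
  unfolding projective_wrt_def
proof (intro allI impI)
  fix h assume hh: "alg_hom Ops ar C (free_alg Ops ar C X mu) B h"
  obtain g where g: "\<forall>x\<in>X. g x \<in> acar A \<and> mu x \<le> amu A (g x) \<and> e (g x) = h (Var x)"
    using ex[OF hh] by blast
  have gX: "\<forall>x\<in>X. g x \<in> acar A \<and> mu x \<le> amu A (g x)" using g by blast
  have ge: "\<forall>x\<in>X. e (g x) = h (Var x)" using g by blast
  show "\<exists>k. alg_hom Ops ar C (free_alg Ops ar C X mu) A k \<and>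
          (\<forall>x\<in>acar (free_alg Ops ar C X mu). e (k x) = h x)"
    using ev_hom[OF algA gX] ev_comm[OF algA gX eh hh ge]
    by (auto simp: free_alg_def)
qed

theorem lemma51:
  fixes Ops :: "'o set" and ar :: "'o \<Rightarrow> nat" and C :: "'c set"
    and A :: "('a, 'h::complete_lattice, 'o, 'c) alg"
    and B :: "('b, 'h, 'o, 'c) alg"
    and e :: "'a \<Rightarrow> 'b"
  assumes frame: "is_frame TYPE('h)"
    and sig: "signature Ops ar C"
    and algA: "is_alg Ops ar C A"
    and algB: "is_alg Ops ar C B"
    and eE: "in_E_Sigma Ops ar C A B e"
  shows "(\<forall>X :: 'x set. projective_wrt Ops ar C (free_alg Ops ar C X (\<lambda>_. bot)) A B e)
       \<and> (split_epi_fuz (acar A) (amu A) (acar B) (amu B) e \<longrightarrow>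
            (\<forall>(X :: 'y set) mu. projective_wrt Ops ar C (free_alg Ops ar C X mu) A B e))
       \<and> ((\<forall>(X :: 'b set) mu. projective_wrt Ops ar C (free_alg Ops ar C X mu) A B e) \<longrightarrow>
            split_epi_fuz (acar A) (amu A) (acar B) (amu B) e)"
proof (intro conjI impI allI)
  have eh: "alg_hom Ops ar C A B e" and surj: "e ` acar A = acar B"
    using eE by (auto simp: in_E_Sigma_def)
  {
    fix X :: "'x set"
    show "projective_wrt Ops ar C (free_alg Ops ar C X (\<lambda>_. bot)) A B e"
    proof (rule proj_gen[OF algA eh])
      fix h assume hh: "alg_hom Ops ar C (free_alg Ops ar C X (\<lambda>_. bot)) B h"
      have "\<forall>x\<in>X. h (Var x) \<in> acar B"
        using hh unfolding alg_hom_def fuz_arrow_def free_alg_def by (auto intro: wft.intros)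
      then have "\<forall>x\<in>X. \<exists>a\<in>acar A. e a = h (Var x)" using surj by (metis imageE)
      then obtain g where "\<forall>x\<in>X. g x \<in> acar A \<and> e (g x) = h (Var x)" by metis
      then show "\<exists>g. \<forall>x\<in>X. g x \<in> acar A \<and> bot \<le> amu A (g x) \<and> e (g x) = h (Var x)"
        by auto
    qed
  }
  {
    fix X :: "'y set" and mu
    assume sp: "split_epi_fuz (acar A) (amu A) (acar B) (amu B) e"
    then obtain s where s: "fuz_arrow (acar B) (amu B) (acar A) (amu A) s" "\<forall>y\<in>acar B. e (s y) = y"
      unfolding split_epi_fuz_def by blast
    show "projective_wrt Ops ar C (free_alg Ops ar C X mu) A B e"
    proof (rule proj_gen[OF algA eh])
      fix h assume hh: "alg_hom Ops ar C (free_alg Ops ar C X mu) B h"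
      have "\<forall>x\<in>X. h (Var x) \<in> acar B \<and> mu x \<le> amu B (h (Var x))"
        using hh unfolding alg_hom_def fuz_arrow_def free_alg_def
        by (auto intro: wft.intros)
      then have "\<forall>x\<in>X. s (h (Var x)) \<in> acar A \<and> mu x \<le> amu A (s (h (Var x))) \<and> e (s (h (Var x))) = h (Var x)"
        using s unfolding fuz_arrow_def by (meson order_trans)
      then show "\<exists>g. \<forall>x\<in>X. g x \<in> acar A \<and> mu x \<le> amu A (g x) \<and> e (g x) = h (Var x)"
        by (intro exI[of _ "\<lambda>x. s (h (Var x))"]) simp
    qed
  }
  {
    assume allp: "\<forall>(X :: 'b set) mu. projective_wrt Ops ar C (free_alg Ops ar C X mu) A B e"
    let ?P = "free_alg Ops ar C (acar B) (amu B)"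
    let ?h = "ev id (aop B) (acst B)"
    have gB: "\<forall>x\<in>acar B. id x \<in> acar B \<and> amu B x \<le> amu B (id x)" by simp
    have hh: "alg_hom Ops ar C ?P B ?h" by (rule ev_hom[OF algB gB])
    obtain k where k: "alg_hom Ops ar C ?P A k" "\<forall>x\<in>acar ?P. e (k x) = ?h x"
      using allp hh unfolding projective_wrt_def by blast
    define s where "s = (\<lambda>y. k (Var y))"
    have var: "\<And>y. y \<in> acar B \<Longrightarrow> Var y \<in> acar ?P" by (simp add: free_alg_def wft.intros)
    have "fuz_arrow (acar B) (amu B) (acar A) (amu A) s"
      using k(1) var unfolding alg_hom_def fuz_arrow_def s_def
      by (metis free_alg_def alg.select_convs(2) tmu.simps(1))
    moreover have "\<forall>y\<in>acar B. e (s y) = y" using k(2) var by (simp add: s_def)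
    moreover have "fuz_arrow (acar A) (amu A) (acar B) (amu B) e" using eh by (simp add: alg_hom_def)
    ultimately show "split_epi_fuz (acar A) (amu A) (acar B) (amu B) e"
      unfolding split_epi_fuz_def by blast
  }
qed

end
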